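(* Let $G$ be a bipartite permutation graph and let $M$ be a matching in $G$. The following are equivalent: (i) $M$ is uniquely restricted; (ii) there is no alternating cycle of length 4 with respect to $M$ in $G$; (iii) for any two edges $e,e'\in M$, $\{e,e'\}$ is a uniquely restricted matching in $G$.
   Context: Graphs are finite, simple, undirected. For a permutation $\pi$ of $\{1,\dots,n\}$, $G_\pi$ has vertex set $\{1,\dots,n\}$ and edges $ij$ with $(i-j)(\pi(i)-\pi(j))<0$; a permutation graph is a graph isomorphic to some $G_\pi$, and a bipartite permutation graph is a bipartite permutation graph. A matching is a set of pairwise vertex-disjoint edges; it is uniquely restricted if no other matching of $G$ matches exactly the same vertex set. An alternating cycle with respect to $M$ is an even cycle of $G$ in which every second edge belongs to $M$. *)

theory Defs
  imports Main
begin

definition graph :: "'a set \<Rightarrow> 'a set set \<Rightarrow> bool" where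
  "graph V E \<longleftrightarrow> finite V \<and> (\<forall>e\<in>E. \<exists>u v. e = {u, v} \<and> u \<noteq> v \<and> u \<in> V \<and> v \<in> V)"

definition perm_edges :: "nat \<Rightarrow> (nat \<Rightarrow> nat) \<Rightarrow> nat set set" where
  "perm_edges n \<pi> = {{i, j} | i j. i \<in> {1..n} \<and> j \<in> {1..n} \<and>
      (int i - int j) * (int (\<pi> i) - int (\<pi> j)) < 0}"

definition permutation_graph :: "'a set \<Rightarrow> 'a set set \<Rightarrow> bool" where
  "permutation_graph V E \<longleftrightarrow> graph V E \<and>
     (\<exists>n \<pi> f. bij_betw \<pi> {1..n} {1..n} \<and> bij_betw f V {1..n} \<and>
        (\<forall>u\<in>V. \<forall>v\<in>V. {u, v} \<in> E \<longleftrightarrow> {f u, f v} \<in> perm_edges n \<pi>))"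

definition bipartite :: "'a set \<Rightarrow> 'a set set \<Rightarrow> bool" where
  "bipartite V E \<longleftrightarrow> (\<exists>A B. A \<union> B = V \<and> A \<inter> B = {} \<and>
      (\<forall>e\<in>E. card (e \<inter> A) = 1 \<and> card (e \<inter> B) = 1))"

definition bipartite_permutation_graph :: "'a set \<Rightarrow> 'a set set \<Rightarrow> bool" where
  "bipartite_permutation_graph V E \<longleftrightarrow> permutation_graph V E \<and> bipartite V E"

definition matching :: "'a set set \<Rightarrow> 'a set set \<Rightarrow> bool" where
  "matching E M \<longleftrightarrow> M \<subseteq> E \<and> (\<forall>e\<in>M. \<forall>e'\<in>M. e \<noteq> e' \<longrightarrow> e \<inter> e' = {})"

definition uniquely_restricted :: "'a set set \<Rightarrow> 'a set set \<Rightarrow> bool" where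
  "uniquely_restricted E M \<longleftrightarrow> matching E M \<and>
     (\<forall>M'. matching E M' \<and> \<Union>M' = \<Union>M \<longrightarrow> M' = M)"

text \<open>An alternating cycle w.r.t. M, given by its distinct vertex list cs = [v_0,...,v_(k-1)]
  with edges {v_i, v_(i+1 mod k)}: even length (at least 4), all edges in E,
  and every second edge (those at even positions) in M.\<close>
definition alternating_cycle :: "'a set set \<Rightarrow> 'a set set \<Rightarrow> 'a list \<Rightarrow> bool" where
  "alternating_cycle E M cs \<longleftrightarrow> distinct cs \<and> even (length cs) \<and> length cs \<ge> 4 \<and>
     (\<forall>i < length cs. {cs ! i, cs ! ((i + 1) mod length cs)} \<in> E) \<and>
     (\<forall>i < length cs. even i \<longrightarrow> {cs ! i, cs ! ((i + 1) mod length cs)} \<in> M)"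

end

theory Submission
  imports Defs
begin

definition alt4 :: "'a set set \<Rightarrow> 'a set set \<Rightarrow> bool" where
  "alt4 E M \<longleftrightarrow> (\<exists>a b c d. distinct [a,b,c,d] \<and> {a,b}\<in>M \<and> {b,c}\<in>E \<and> {c,d}\<in>M \<and> {d,a}\<in>E)"

lemma edge_props: "graph V E \<Longrightarrow> {a,b}\<in>E \<Longrightarrow> a\<in>V \<and> b\<in>V \<and> a\<noteq>b"
  unfolding graph_def by (fastforce simp: doubleton_eq_iff)

lemma cover: assumes "graph V E" "matching E M" "v \<in> \<Union>M" shows "\<exists>w. {v,w} \<in> M"
proof -
  obtain e where e: "e\<in>M" "v\<in>e" using assms(3) by auto
  then have "e\<in>E" using assms(2) by (auto simp: matching_def)
  then obtain p q where "e = {p,q}" using assms(1) unfolding graph_def by blast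
  then show ?thesis using e by (auto simp: insert_commute)
qed

lemma alt4_iff:
  assumes "matching E M"
  shows "(\<exists>cs. length cs = 4 \<and> alternating_cycle E M cs) \<longleftrightarrow> alt4 E M"
proof
  assume "\<exists>cs. length cs = 4 \<and> alternating_cycle E M cs"
  then obtain cs where l: "length cs = 4" and ac: "alternating_cycle E M cs" by blast
  obtain a b c d where cs: "cs = [a,b,c,d]" using l
    by (auto simp: numeral_eq_Suc length_Suc_conv)
  have d: "distinct [a,b,c,d]" using ac cs by (simp add: alternating_cycle_def)
  have AE: "\<forall>i<4. {cs ! i, cs ! ((i + 1) mod 4)} \<in> E"
    and AM: "\<forall>i<4. even i \<longrightarrow> {cs ! i, cs ! ((i + 1) mod 4)} \<in> M"
    using ac l unfolding alternating_cycle_def by simp_all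
  have "{a,b}\<in>M" using AM[rule_format, of 0] cs by simp
  moreover have "{c,d}\<in>M" using AM[rule_format, of 2] cs by simp
  moreover have "{b,c}\<in>E" using AE[rule_format, of 1] cs by simp
  moreover have "{d,a}\<in>E" using AE[rule_format, of 3] cs by simp
  ultimately show "alt4 E M" using d unfolding alt4_def by blast
next
  assume "alt4 E M"
  then obtain a b c d where h: "distinct [a,b,c,d]" "{a,b}\<in>M" "{b,c}\<in>E" "{c,d}\<in>M" "{d,a}\<in>E"
    unfolding alt4_def by blast
  have ME: "M \<subseteq> E" using assms by (auto simp: matching_def)
  have "alternating_cycle E M [a,b,c,d]"
    unfolding alternating_cycle_def
  proof (intro conjI allI impI)
    fix i assume "i < length [a,b,c,d]"
    then have "i = 0 \<or> i = 1 \<or> i = 2 \<or> i = 3" by auto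
    then show "{[a,b,c,d] ! i, [a,b,c,d] ! ((i + 1) mod length [a,b,c,d])} \<in> E"
      using h ME by auto
  next
    fix i assume "i < length [a,b,c,d]" "even i"
    then have "i = 0 \<or> i = 2" by auto
    then show "{[a,b,c,d] ! i, [a,b,c,d] ! ((i + 1) mod length [a,b,c,d])} \<in> M"
      using h by auto
  qed (use h in auto)
  then show "\<exists>cs. length cs = 4 \<and> alternating_cycle E M cs" by (intro exI[of _ "[a,b,c,d]"]) simp
qed

lemma core:
  fixes X Y :: "'a \<Rightarrow> int"
  assumes gr: "graph V E"
    and injX: "\<And>u v. u\<in>V \<Longrightarrow> v\<in>V \<Longrightarrow> X u = X v \<Longrightarrow> u = v"
    and injY: "\<And>u v. u\<in>V \<Longrightarrow> v\<in>V \<Longrightarrow> Y u = Y v \<Longrightarrow> u = v"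
    and adj: "\<And>u v. u\<in>V \<Longrightarrow> v\<in>V \<Longrightarrow>
        ({u,v}\<in>E \<longleftrightarrow> (X u < X v \<and> Y v < Y u) \<or> (X v < X u \<and> Y u < Y v))"
    and tri: "\<And>a b c. {a,b}\<in>E \<Longrightarrow> {b,c}\<in>E \<Longrightarrow> {a,c}\<in>E \<Longrightarrow> False"
    and mM: "matching E M" and mM': "matching E M'" and cov: "\<Union>M' = \<Union>M"
    and noalt: "\<not> alt4 E M"
  shows "M' = M"
proof (rule ccontr)
  assume ne: "M' \<noteq> M"
  have ev: "\<And>a b. {a,b}\<in>E \<Longrightarrow> a\<in>V \<and> b\<in>V \<and> a\<noteq>b" using gr edge_props by metis
  have ME: "M \<subseteq> E" "M' \<subseteq> E" using mM mM' by (auto simp: matching_def)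
  have sh: "\<And>e e' x. e\<in>M \<Longrightarrow> e'\<in>M \<Longrightarrow> x\<in>e \<Longrightarrow> x\<in>e' \<Longrightarrow> e=e'"
    using mM unfolding matching_def by blast
  have sh': "\<And>e e' x. e\<in>M' \<Longrightarrow> e'\<in>M' \<Longrightarrow> x\<in>e \<Longrightarrow> x\<in>e' \<Longrightarrow> e=e'"
    using mM' unfolding matching_def by blast
  have cv: "\<And>v. v \<in> \<Union>M \<Longrightarrow> \<exists>w. {v,w}\<in>M" using cover[OF gr mM] by blast
  have cv': "\<And>v. v \<in> \<Union>M \<Longrightarrow> \<exists>w. {v,w}\<in>M'" using cover[OF gr mM'] cov by blast
  have inS: "\<And>v w. {v,w}\<in>M \<Longrightarrow> v \<in> \<Union>M \<and> w \<in> \<Union>M" by blast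
  have inS': "\<And>v w. {v,w}\<in>M' \<Longrightarrow> v \<in> \<Union>M \<and> w \<in> \<Union>M" using cov by blast
  have xne: "\<And>u v. u\<in>V \<Longrightarrow> v\<in>V \<Longrightarrow> u\<noteq>v \<Longrightarrow> X u \<noteq> X v \<and> Y u \<noteq> Y v"
    using injX injY by blast
  have ss: "X p < X q \<longleftrightarrow> X p < X r" if a: "{p,q}\<in>E" "{p,r}\<in>E" "q\<noteq>r" for p q r
  proof (rule ccontr)
    assume nn: "\<not> ?thesis"
    have V: "p\<in>V" "q\<in>V" "r\<in>V" "p\<noteq>q" "p\<noteq>r" using ev a by auto
    have x: "X p \<noteq> X q" "X p \<noteq> X r" "X q \<noteq> X r" "Y q \<noteq> Y r" using xne V a(3) by auto
    have "(X p < X q \<and> X r < X p) \<or> (X q < X p \<and> X p < X r)" using nn x by auto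
    moreover have "(X p < X q \<and> Y q < Y p) \<or> (X q < X p \<and> Y p < Y q)" using adj[of p q] a V by auto
    moreover have "(X p < X r \<and> Y r < Y p) \<or> (X r < X p \<and> Y p < Y r)" using adj[of p r] a V by auto
    ultimately have "(X q < X r \<and> Y r < Y q) \<or> (X r < X q \<and> Y q < Y r)" by auto
    then have "{q,r}\<in>E" using adj[of q r] V by auto
    then show False using tri[of q p r] a by (simp add: insert_commute)
  qed
  have na: "X u < X v \<longleftrightarrow> Y u < Y v" if "u\<in>V" "v\<in>V" "u\<noteq>v" "{u,v}\<notin>E" for u v
    using adj[of u v] xne[of u v] that by auto
  have nc: "X b < X d \<and> Y b < Y d" if a: "{a,b}\<in>M" "{c,d}\<in>M" "X a < X b" "X c < X d" "X a < X c"
    for a b c d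
  proof -
    have E: "{a,b}\<in>E" "{c,d}\<in>E" using a ME by auto
    have V: "a\<in>V" "b\<in>V" "c\<in>V" "d\<in>V" "a\<noteq>b" "c\<noteq>d" using ev E by auto
    have ac: "a\<noteq>c" using a by auto
    have ad: "a\<noteq>d" using a by auto
    have bd: "b\<noteq>d"
    proof
      assume "b = d" then have "{a,b} = {c,d}" using sh[of "{a,b}" "{c,d}" b] a by auto
      then show False using ac ad V by (auto simp: doubleton_eq_iff)
    qed
    have "{a,c}\<notin>E"
    proof
      assume "{a,c}\<in>E"
      then have "{c,a}\<in>E" by (simp add: insert_commute)
      then show False using ss[of c a d] E ad a by auto
    qed
    then have Yac: "Y a < Y c" using na[of a c] V ac a by auto
    have Yab: "Y b < Y a" using adj[of a b] E V a by auto
    have Ycd: "Y d < Y c" using adj[of c d] E V a by auto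
    have Xbd: "X b < X d"
    proof (rule ccontr)
      assume "\<not> X b < X d"
      then have Xdb: "X d < X b" using xne[of b d] V bd by auto
      have "{b,d}\<notin>E"
      proof
        assume "{b,d}\<in>E"
        then have "{d,b}\<in>E" by (simp add: insert_commute)
        moreover have "{d,c}\<in>E" using E by (simp add: insert_commute)
        moreover have "c \<noteq> b" using Xdb a by auto
        ultimately show False using ss[of d c b] Xdb a by auto
      qed
      then have "Y d < Y b" using na[of d b] V bd Xdb by (auto simp: insert_commute)
      have "{b,c}\<in>E" using adj[of b c] V Xdb a Yab Yac by auto
      moreover have "{d,a}\<in>E" using adj[of d a] V Xdb a \<open>Y d < Y b\<close> Yab by auto
      moreover have "distinct [a,b,c,d]" using V ac ad bd Xdb a by auto
      ultimately show False using noalt a unfolding alt4_def by blast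
    qed
    have "{b,d}\<notin>E"
    proof
      assume "{b,d}\<in>E"
      moreover have "{b,a}\<in>E" using E by (simp add: insert_commute)
      ultimately show False using ss[of b a d] Xbd a ad by auto
    qed
    then have "Y b < Y d" using na[of b d] V bd Xbd by auto
    then show ?thesis using Xbd by auto
  qed
  define S where "S = \<Union>M"
  define D where "D = {u\<in>S. \<exists>l l'. {u,l}\<in>M \<and> {u,l'}\<in>M' \<and> l \<noteq> l' \<and> X u < X l}"
  have SV: "S \<subseteq> V"
  proof
    fix v assume "v\<in>S"
    then obtain e where e: "e\<in>M" "v\<in>e" unfolding S_def by blast
    then have "e\<in>E" using ME by auto
    then obtain p q where "e = {p,q}" "p\<in>V" "q\<in>V" using gr unfolding graph_def by blast
    then show "v\<in>V" using e by auto
  qed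
  have finD: "finite D" using SV gr unfolding D_def graph_def by (auto intro: finite_subset)
  have "\<exists>e'\<in>M'. e' \<notin> M"
  proof (rule ccontr)
    assume "\<not> ?thesis"
    then have sub: "M' \<subseteq> M" by blast
    have "M \<subseteq> M'"
    proof
      fix e assume e: "e\<in>M"
      then obtain p q where "e = {p,q}" using ME gr unfolding graph_def by blast
      then have "p \<in> \<Union>M'" using cov e by blast
      then obtain e' where "e'\<in>M'" "p\<in>e'" by blast
      then show "e\<in>M'" using sh[of e e' p] sub e \<open>e = {p,q}\<close> by auto
    qed
    then show False using sub ne by blast
  qed
  then obtain e' where e': "e'\<in>M'" "e'\<notin>M" by blast
  then obtain p q where pq: "e' = {p,q}" using ME gr unfolding graph_def by blast
  have pqE: "{p,q}\<in>E" using e' pq ME by auto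
  have pqV: "p\<in>V" "q\<in>V" "p\<noteq>q" using ev pqE by auto
  have pS: "p\<in>S" "q\<in>S" using inS' e' pq unfolding S_def by auto
  obtain r where r: "{p,r}\<in>M" using cv pS unfolding S_def by blast
  obtain s where s: "{q,s}\<in>M" using cv pS unfolding S_def by blast
  have rq: "r\<noteq>q" using r e' pq by auto
  have sp: "s\<noteq>p" using s e' pq by (auto simp: insert_commute)
  have "D \<noteq> {}"
  proof (cases "X p < X q")
    case True
    then have "X p < X r" using ss[of p q r] pqE r ME rq by auto
    then have "p\<in>D" unfolding D_def using pS r rq e' pq by blast
    then show ?thesis by blast
  next
    case False
    then have "X q < X p" using xne pqV by force
    moreover have "{q,p}\<in>E" using pqE by (simp add: insert_commute)
    ultimately have "X q < X s" using ss[of q p s] s ME sp by auto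
    moreover have "{q,p}\<in>M'" using e' pq by (simp add: insert_commute)
    ultimately have "q\<in>D" unfolding D_def using pS s sp by blast
    then show ?thesis by blast
  qed
  then have "Min (X ` D) \<in> X ` D" using finD by auto
  then obtain u where uD: "u\<in>D" and umin: "X u = Min (X ` D)" by auto
  have umin': "\<And>v. v\<in>D \<Longrightarrow> X u \<le> X v" using umin finD by auto
  obtain l l' where ul: "{u,l}\<in>M" and ul': "{u,l'}\<in>M'" and ll: "l\<noteq>l'" and Xul: "X u < X l"
    and uS: "u\<in>S" using uD unfolding D_def by blast
  have E1: "{u,l}\<in>E" "{u,l'}\<in>E" using ul ul' ME by auto
  have Xul': "X u < X l'" using ss[of u l l'] E1 ll Xul by auto
  obtain u2 where lu2: "{l,u2}\<in>M'" using cv' inS[OF ul] by blast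
  have u2l: "{u2,l}\<in>M'" "{u2,l}\<in>E" using lu2 ME by (auto simp: insert_commute)
  have u2u: "u2 \<noteq> u"
  proof
    assume "u2 = u"
    then have "{u,l} = {u,l'}" using sh'[of "{u,l}" "{u,l'}" u] u2l ul' by auto
    then show False using ll by (auto simp: doubleton_eq_iff)
  qed
  have V1: "u\<in>V" "l\<in>V" "l'\<in>V" "u2\<in>V" using ev E1 u2l by auto
  have "X l < X u \<longleftrightarrow> X l < X u2" using ss[of l u u2] E1 lu2 ME u2u by (auto simp: insert_commute)
  then have Xu2l: "X u2 < X l" using Xul xne[of u2 l] V1 ev u2l by force
  obtain m where u2m: "{u2,m}\<in>M" using cv inS'[OF u2l(1)] by blast
  have ml: "m \<noteq> l"
  proof
    assume "m = l"
    then have "{u2,l} = {u,l}" using sh[of "{u2,l}" "{u,l}" l] u2m ul by auto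
    then show False using u2u ev E1 by (auto simp: doubleton_eq_iff)
  qed
  have Xu2m: "X u2 < X m" using ss[of u2 l m] u2l u2m ME ml Xu2l by auto
  have "u2\<in>D" unfolding D_def using inS'[OF u2l(1)] u2m u2l ml Xu2m unfolding S_def by blast
  then have Xuu2: "X u < X u2" using umin' xne[of u u2] V1 u2u by force
  obtain uj where luj: "{l',uj}\<in>M" using cv inS'[OF ul'] by blast
  have ujl: "{uj,l'}\<in>M" "{uj,l'}\<in>E" using luj ME by (auto simp: insert_commute)
  have uju: "uj \<noteq> u"
  proof
    assume "uj = u"
    then have "{u,l} = {u,l'}" using sh[of "{u,l}" "{u,l'}" u] ujl ul by auto
    then show False using ll by (auto simp: doubleton_eq_iff)
  qed
  have Vj: "uj\<in>V" "m\<in>V" using ev ujl u2m ME by auto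
  have "X l' < X u \<longleftrightarrow> X l' < X uj" using ss[of l' u uj] E1 luj ME uju by (auto simp: insert_commute)
  then have Xujl: "X uj < X l'" using Xul' xne[of uj l'] V1 Vj ev ujl by force
  obtain k where ujk: "{uj,k}\<in>M'" using cv' inS[OF ujl(1)] by blast
  have kl: "k \<noteq> l'"
  proof
    assume "k = l'"
    then have "{uj,l'} = {u,l'}" using sh'[of "{uj,l'}" "{u,l'}" l'] ujk ul' by auto
    then show False using uju ev E1 by (auto simp: doubleton_eq_iff)
  qed
  have kl2: "l' \<noteq> k" using kl by auto
  have "uj \<in> S" using inS[OF ujl(1)] unfolding S_def by blast
  then have "uj\<in>D" unfolding D_def using ujl(1) ujk kl2 Xujl by blast
  then have Xuuj: "X u < X uj" using umin' xne[of u uj] V1 Vj uju by force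
  have Yul: "Y l < Y u" "Y l' < Y u" using adj[of u l] adj[of u l'] E1 V1 Xul Xul' by auto
  show False
  proof (cases "X u2 \<le> X uj")
    case True
    have "Y m \<le> Y l'"
    proof (cases "u2 = uj")
      case True
      then have "{u2,m} = {uj,l'}" using sh[of "{u2,m}" "{uj,l'}" u2] u2m ujl by auto
      then have "m = l'" using ev u2m ME Xu2m Xujl True by (auto simp: doubleton_eq_iff)
      then show ?thesis by simp
    next
      case False
      then have "X u2 < X uj" using \<open>X u2 \<le> X uj\<close> xne[of u2 uj] V1 Vj by force
      then show ?thesis using nc[of u2 m uj l'] u2m ujl Xu2m Xujl by auto
    qed
    then have "{m,u}\<in>E" using adj[of m u] V1 Vj Xuu2 Xu2m Yul by auto
    moreover have "{l,u2}\<in>E" using lu2 ME by auto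
    moreover have "distinct [u,l,u2,m]" using Xul Xuu2 Xu2m Xu2l u2u ml by auto
    ultimately show False using noalt ul u2m unfolding alt4_def by blast
  next
    case False
    then have lt: "X uj < X u2" by auto
    have "{u,uj}\<notin>E"
    proof
      assume "{u,uj}\<in>E"
      then have "{uj,u}\<in>E" by (simp add: insert_commute)
      moreover have "u \<noteq> l'" using Xul' by auto
      ultimately show False using ss[of uj u l'] ujl Xuuj Xujl by auto
    qed
    then have "Y u < Y uj" using na[of u uj] V1 Vj uju Xuuj by auto
    then have "{l,uj}\<in>E" using adj[of l uj] V1 Vj lt Xu2l Yul by auto
    moreover have "{l',u}\<in>E" using E1 by (simp add: insert_commute)
    moreover have "distinct [u,l,uj,l']" using Xul Xuuj Xujl lt Xu2l ll Xul' by auto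
    ultimately show False using noalt ul ujl unfolding alt4_def by blast
  qed
qed

lemma ur_noalt:
  assumes mM: "matching E M" and ur: "uniquely_restricted E M"
  shows "\<not> alt4 E M"
proof
  assume "alt4 E M"
  then obtain a b c d where h: "distinct [a,b,c,d]" "{a,b}\<in>M" "{b,c}\<in>E" "{c,d}\<in>M" "{d,a}\<in>E"
    unfolding alt4_def by blast
  have ME: "M \<subseteq> E" using mM by (auto simp: matching_def)
  have sh: "\<And>e e' x. e\<in>M \<Longrightarrow> e'\<in>M \<Longrightarrow> x\<in>e \<Longrightarrow> x\<in>e' \<Longrightarrow> e=e'"
    using mM unfolding matching_def by blast
  define M' where "M' = (M - {{a,b},{c,d}}) \<union> {{b,c},{d,a}}"
  have far: "e \<inter> {a,b,c,d} = {}" if "e\<in>M" "e\<noteq>{a,b}" "e\<noteq>{c,d}" for e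
  proof -
    have "a\<notin>e" "b\<notin>e" using sh[of e "{a,b}"] that h by blast+
    moreover have "c\<notin>e" "d\<notin>e" using sh[of e "{c,d}"] that h by blast+
    ultimately show ?thesis by blast
  qed
  have "matching E M'"
    unfolding matching_def
  proof (intro conjI ballI impI)
    show "M' \<subseteq> E" using ME h unfolding M'_def by auto
  next
    fix e e' assume e: "e\<in>M'" "e'\<in>M'" "e\<noteq>e'"
    show "e \<inter> e' = {}"
    proof (cases "e\<in>M - {{a,b},{c,d}}")
      case True
      note t = this
      show ?thesis
      proof (cases "e'\<in>M - {{a,b},{c,d}}")
        case True
        then show ?thesis using t e mM unfolding matching_def by blast
      next
        case False
        then have "e' \<subseteq> {a,b,c,d}" using e unfolding M'_def by auto
        then show ?thesis using far[of e] t by blast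
      qed
    next
      case False
      then have e1: "e = {b,c} \<or> e = {d,a}" using e unfolding M'_def by auto
      show ?thesis
      proof (cases "e'\<in>M - {{a,b},{c,d}}")
        case True
        have "e \<subseteq> {a,b,c,d}" using e1 by auto
        then show ?thesis using far[of e'] True by blast
      next
        case False
        then have "e' = {b,c} \<or> e' = {d,a}" using e unfolding M'_def by auto
        then show ?thesis using e1 e(3) h(1) by auto
      qed
    qed
  qed
  moreover have "\<Union>M' = \<Union>M"
  proof -
    have "\<Union>M = \<Union>(M - {{a,b},{c,d}}) \<union> {a,b,c,d}" using h by blast
    moreover have "\<Union>M' = \<Union>(M - {{a,b},{c,d}}) \<union> {a,b,c,d}" unfolding M'_def by blast
    ultimately show ?thesis by simp
  qed
  moreover have "M' \<noteq> M"
  proof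
    assume "M' = M"
    then have "{b,c}\<in>M" unfolding M'_def by blast
    then have "{b,c} = {a,b}" using sh[of "{b,c}" "{a,b}" b] h by blast
    then show False using h(1) by (auto simp: doubleton_eq_iff)
  qed
  ultimately show False using ur unfolding uniquely_restricted_def by blast
qed

lemma alt4_mono: "N \<subseteq> M \<Longrightarrow> alt4 E N \<Longrightarrow> alt4 E M"
  unfolding alt4_def by blast

lemma perm_edges_iff:
  assumes "i\<in>{1..n}" "j\<in>{1..n}"
  shows "{i,j}\<in>perm_edges n \<pi> \<longleftrightarrow> (int i - int j) * (int (\<pi> i) - int (\<pi> j)) < 0"
proof
  assume "{i,j}\<in>perm_edges n \<pi>"
  then obtain i' j' where "{i,j} = {i',j'}" "(int i' - int j') * (int (\<pi> i') - int (\<pi> j')) < 0"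
    unfolding perm_edges_def by blast
  then show "(int i - int j) * (int (\<pi> i) - int (\<pi> j)) < 0"
    by (auto simp: doubleton_eq_iff mult_less_0_iff)
next
  assume "(int i - int j) * (int (\<pi> i) - int (\<pi> j)) < 0"
  then show "{i,j}\<in>perm_edges n \<pi>" using assms unfolding perm_edges_def by blast
qed

theorem theorem5:
  fixes V :: "'a set" and E M :: "'a set set"
  assumes "bipartite_permutation_graph V E"
    and "matching E M"
  shows "(uniquely_restricted E M \<longleftrightarrow> \<not> (\<exists>cs. length cs = 4 \<and> alternating_cycle E M cs))
       \<and> (uniquely_restricted E M \<longleftrightarrow> (\<forall>e\<in>M. \<forall>e'\<in>M. uniquely_restricted E {e, e'}))"
proof -
  have gr: "graph V E" and bip: "bipartite V E" using assms(1)
    unfolding bipartite_permutation_graph_def permutation_graph_def by auto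
  obtain n \<pi> f where pi: "bij_betw \<pi> {1..n} {1..n}" and fb: "bij_betw f V {1..n}"
    and ed: "\<forall>u\<in>V. \<forall>v\<in>V. {u, v} \<in> E \<longleftrightarrow> {f u, f v} \<in> perm_edges n \<pi>"
    using assms(1) unfolding bipartite_permutation_graph_def permutation_graph_def by blast
  define X where "X = (\<lambda>v. int (f v))"
  define Y where "Y = (\<lambda>v. int (\<pi> (f v)))"
  have fin: "\<And>v. v\<in>V \<Longrightarrow> f v \<in> {1..n}" using fb bij_betw_apply by fast
  have injX: "\<And>u v. u\<in>V \<Longrightarrow> v\<in>V \<Longrightarrow> X u = X v \<Longrightarrow> u = v"
    unfolding X_def using fb bij_betw_imp_inj_on inj_onD by (metis of_nat_eq_iff)
  have injY: "\<And>u v. u\<in>V \<Longrightarrow> v\<in>V \<Longrightarrow> Y u = Y v \<Longrightarrow> u = v"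
  proof -
    fix u v assume "u\<in>V" "v\<in>V" "Y u = Y v"
    then have "\<pi> (f u) = \<pi> (f v)" unfolding Y_def by simp
    then have "f u = f v" using pi fin \<open>u\<in>V\<close> \<open>v\<in>V\<close> bij_betw_imp_inj_on inj_onD by metis
    then show "u = v" using fb \<open>u\<in>V\<close> \<open>v\<in>V\<close> bij_betw_imp_inj_on inj_onD by metis
  qed
  have adj: "\<And>u v. u\<in>V \<Longrightarrow> v\<in>V \<Longrightarrow>
        ({u,v}\<in>E \<longleftrightarrow> (X u < X v \<and> Y v < Y u) \<or> (X v < X u \<and> Y u < Y v))"
  proof -
    fix u v assume uv: "u\<in>V" "v\<in>V"
    have "{u,v}\<in>E \<longleftrightarrow> (int (f u) - int (f v)) * (int (\<pi> (f u)) - int (\<pi> (f v))) < 0"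
      using ed uv perm_edges_iff[OF fin fin] by blast
    then show "({u,v}\<in>E \<longleftrightarrow> (X u < X v \<and> Y v < Y u) \<or> (X v < X u \<and> Y u < Y v))"
      unfolding X_def Y_def by (auto simp: mult_less_0_iff)
  qed
  have tri: "\<And>a b c. {a,b}\<in>E \<Longrightarrow> {b,c}\<in>E \<Longrightarrow> {a,c}\<in>E \<Longrightarrow> False"
  proof -
    fix a b c assume e: "{a,b}\<in>E" "{b,c}\<in>E" "{a,c}\<in>E"
    have ne: "a\<noteq>b" "b\<noteq>c" "a\<noteq>c" using e edge_props[OF gr] by blast+
    obtain A where A: "\<forall>e\<in>E. card (e \<inter> A) = 1" using bip unfolding bipartite_def by blast
    have c1: "card ({a,b} \<inter> A) = 1" "card ({b,c} \<inter> A) = 1" "card ({a,c} \<inter> A) = 1"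
      using A e by auto
    show False
    proof (cases "a\<in>A")
      case True
      then have "b\<notin>A" using c1(1) ne by (cases "b\<in>A") auto
      moreover have "c\<notin>A" using c1(3) ne True by (cases "c\<in>A") auto
      ultimately show False using c1(2) by simp
    next
      case False
      then have "b\<in>A" using c1(1) by (cases "b\<in>A") auto
      then have "c\<notin>A" using c1(2) ne by (cases "c\<in>A") auto
      then show False using c1(3) False by simp
    qed
  qed
  have P2: "uniquely_restricted E N" if "matching E N" "\<not> alt4 E N" for N
    unfolding uniquely_restricted_def
  proof (intro conjI allI impI)
    fix M' assume "matching E M' \<and> \<Union>M' = \<Union>N"
    then show "M' = N"
      apply (intro core[where V=V and E=E and X=X and Y=Y and M=N and M'=M'])
      using gr injX injY adj tri that by blast+
  qed (use that in blast)
  have UR: "uniquely_restricted E N \<longleftrightarrow> \<not> alt4 E N" if "matching E N" for N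
    using P2 ur_noalt that by blast
  have sub: "matching E {e,e'}" if "e\<in>M" "e'\<in>M" for e e'
    using assms(2) that unfolding matching_def by blast
  have A: "alt4 E M \<longleftrightarrow> (\<exists>e\<in>M. \<exists>e'\<in>M. alt4 E {e,e'})"
  proof
    assume "alt4 E M"
    then obtain a b c d where h: "distinct [a,b,c,d]" "{a,b}\<in>M" "{b,c}\<in>E" "{c,d}\<in>M" "{d,a}\<in>E"
      unfolding alt4_def by blast
    then have "alt4 E {{a,b},{c,d}}" unfolding alt4_def by blast
    then show "\<exists>e\<in>M. \<exists>e'\<in>M. alt4 E {e,e'}" using h by blast
  next
    assume "\<exists>e\<in>M. \<exists>e'\<in>M. alt4 E {e,e'}"
    then obtain e e' where "e\<in>M" "e'\<in>M" "alt4 E {e,e'}" by blast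
    then show "alt4 E M" using alt4_mono[of "{e,e'}" M E] by blast
  qed
  show ?thesis
    using UR[OF assms(2)] alt4_iff[OF assms(2)] A UR[OF sub] by blast
qed

end
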